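(* Let $Q_x$ be a full-dimensional rational polytope in $\mathbb{R}^m$, $m\ge2$; let $H^1\subseteq\mathbb{R}^m$ be a hyperplane with $Q_x^1:=H^1\cap Q_x\neq\emptyset$; let $H\neq H^1$ be a hyperplane supporting a nonempty face of $Q_x^1$, and let $\bar H$ be the closed half-space bounded by $H$ not containing $Q_x^1$. Then for every point $\bar x$ in the relative interior of $\bar H\cap H^1$, $$d(\bar x,Q_x)\ge d(\bar x,H\cap H^1)\cdot\sin\theta(Q_x,H^1,\bar H).$$
   Context: Such a $(Q_x,H^1,\bar H)$ is called a triplet. $\theta(Q_x,H^1,\bar H)$ denotes the maximum, over all hyperplanes $H^*\subseteq\mathbb{R}^m$ with $H^*\cap H^1=H\cap H^1$ that separate $\mathrm{int}(Q_x)$ from $\bar H\cap H^1$, of the angle (in $[0,\pi/2]$) between $H^1$ and $H^*$; such hyperplanes exist and the maximum is attained. $d$ denotes Euclidean distance, with $d(x,S)=\inf_{y\in S}d(x,y)$. *)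

theory Defs
  imports "HOL-Analysis.Analysis"
begin

definition rational_polytope :: "(real^'m) set \<Rightarrow> bool" where
  "rational_polytope Q \<longleftrightarrow>
     (\<exists>V. finite V \<and> (\<forall>v\<in>V. \<forall>i. v $ i \<in> \<rat>) \<and> Q = convex hull V)"

definition hyperplane_angle :: "'a::real_inner \<Rightarrow> 'a \<Rightarrow> real" where
  "hyperplane_angle a c = arccos (\<bar>a \<bullet> c\<bar> / (norm a * norm c))"

definition separates_hp :: "'a::real_inner set \<Rightarrow> 'a set \<Rightarrow> 'a \<Rightarrow> real \<Rightarrow> bool" where
  "separates_hp S T c d \<longleftrightarrow> c \<noteq> 0 \<and>
     (((\<forall>x\<in>S. c \<bullet> x \<le> d) \<and> (\<forall>x\<in>T. c \<bullet> x \<ge> d)) \<or>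
      ((\<forall>x\<in>S. c \<bullet> x \<ge> d) \<and> (\<forall>x\<in>T. c \<bullet> x \<le> d)))"

definition theta :: "'a::euclidean_space set \<Rightarrow> 'a set \<Rightarrow> 'a set \<Rightarrow> real" where
  "theta Q H1 Hbar = Sup {hyperplane_angle a c | a b c d.
      a \<noteq> 0 \<and> H1 = {x. a \<bullet> x = b} \<and> c \<noteq> 0 \<and>
      {x. c \<bullet> x = d} \<inter> H1 = frontier Hbar \<inter> H1 \<and>
      separates_hp (interior Q) (Hbar \<inter> H1) c d}"

end

theory Submission
  imports Defs
begin

lemma infdist_ge:
  assumes "A \<noteq> {}" "\<And>y. y \<in> A \<Longrightarrow> r \<le> dist x y"
  shows "r \<le> infdist x A"
  using assms unfolding infdist_def by (auto intro: cInf_greatest)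

lemma sin_angle:
  fixes a c :: "'a::real_inner"
  assumes "a \<noteq> 0" "c \<noteq> 0"
  defines "w \<equiv> c - ((c \<bullet> a) / (a \<bullet> a)) *\<^sub>R a"
  shows "sin (hyperplane_angle a c) = norm w / norm c"
proof -
  define r where "r = \<bar>a \<bullet> c\<bar> / (norm a * norm c)"
  have na: "norm a > 0" and nc: "norm c > 0" using assms by auto
  have r1: "r \<le> 1" "0 \<le> r" unfolding r_def using Cauchy_Schwarz_ineq2[of a c] na nc by (auto simp: field_simps)
  have ww: "w \<bullet> w = c \<bullet> c - (c \<bullet> a)^2 / (a \<bullet> a)"
    unfolding w_def using assms by (simp add: algebra_simps inner_commute power2_eq_square field_simps)
  have "1 - r^2 = (w \<bullet> w) / (c \<bullet> c)"
    unfolding ww r_def using na nc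
    by (simp add: power_divide power_mult_distrib power2_norm_eq_inner[symmetric] field_simps inner_commute)
  hence "sqrt (1 - r^2) = norm w / norm c"
    by (simp add: real_sqrt_divide norm_eq_sqrt_inner)
  thus ?thesis unfolding hyperplane_angle_def r_def[symmetric] using r1 by (simp add: sin_arccos)
qed

lemma oriented:
  fixes a' c xbar :: "'a::real_inner"
  assumes a': "a' \<noteq> 0" and c: "c \<noteq> 0"
    and L: "{x. c \<bullet> x = d} \<inter> {x. a' \<bullet> x = b'} = L"
    and Qne: "Q \<noteq> {}" and Qs: "\<forall>y\<in>Q. c \<bullet> y \<le> d"
    and xh: "a' \<bullet> xbar = b'" and xc: "c \<bullet> xbar \<ge> d"
  shows "infdist xbar L * sin (hyperplane_angle a' c) \<le> infdist xbar Q"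
proof -
  define w where "w = c - ((c \<bullet> a') / (a' \<bullet> a')) *\<^sub>R a'"
  have sin: "sin (hyperplane_angle a' c) = norm w / norm c" using sin_angle[OF a' c] w_def by simp
  have nc: "norm c > 0" using c by simp
  have E: "(c \<bullet> xbar - d) / norm c \<le> infdist xbar Q"
  proof (rule infdist_ge[OF Qne])
    fix y assume y: "y \<in> Q"
    have "c \<bullet> xbar - d \<le> c \<bullet> (xbar - y)" using Qs y by (simp add: inner_diff_right)
    also have "\<dots> \<le> norm c * dist xbar y" using norm_cauchy_schwarz[of c "xbar - y"] by (simp add: dist_norm)
    finally show "(c \<bullet> xbar - d) / norm c \<le> dist xbar y" using nc by (simp add: field_simps)
  qed
  show ?thesis
  proof (cases "w = 0")
    case True
    thus ?thesis using sin infdist_nonneg[of xbar Q] by simp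
  next
    case False
    have wa: "w \<bullet> a' = 0" unfolding w_def using a' by (simp add: inner_diff_left)
    have cw: "c \<bullet> w = w \<bullet> w" unfolding w_def using wa[unfolded w_def]
      by (simp add: inner_diff_right inner_diff_left inner_commute)
    have ww: "w \<bullet> w > 0" using False by simp
    define p where "p = xbar - ((c \<bullet> xbar - d) / (w \<bullet> w)) *\<^sub>R w"
    have "a' \<bullet> p = b'" unfolding p_def using xh wa by (simp add: inner_diff_right inner_commute)
    moreover have "c \<bullet> p = d" unfolding p_def using cw ww by (simp add: inner_diff_right)
    ultimately have pL: "p \<in> L" using L by auto
    have "dist xbar p = (c \<bullet> xbar - d) / norm w"
    proof -
      have nw: "norm w > 0" using False by simp
      have "dist xbar p = \<bar>(c \<bullet> xbar - d) / (w \<bullet> w)\<bar> * norm w" unfolding p_def dist_norm by simp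
      also have "\<dots> = (c \<bullet> xbar - d) / (norm w * norm w) * norm w"
        using xc by (simp add: power2_norm_eq_inner[symmetric] power2_eq_square)
      also have "\<dots> = (c \<bullet> xbar - d) / norm w" using nw by (simp add: field_simps)
      finally show ?thesis .
    qed
    hence D: "infdist xbar L \<le> (c \<bullet> xbar - d) / norm w" using infdist_le[OF pL, of xbar] by simp
    have "infdist xbar L * (norm w / norm c) \<le> (c \<bullet> xbar - d) / norm w * (norm w / norm c)"
      using D nc by (intro mult_right_mono) auto
    also have "\<dots> = (c \<bullet> xbar - d) / norm c" using False by simp
    finally show ?thesis using sin E by simp
  qed
qed

lemma mu_exists:
  fixes V :: "'a::real_inner set" and a a1 :: 'a
  assumes fin: "finite V"
    and supp: "\<forall>x\<in>{x. a1 \<bullet> x = b1} \<inter> convex hull V. a \<bullet> x \<le> b"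
  shows "\<exists>\<mu>. \<forall>v\<in>V. (a \<bullet> v - b) + \<mu> * (a1 \<bullet> v - b1) \<le> 0"
proof -
  define f where "f v = a \<bullet> v - b" for v
  define g where "g v = a1 \<bullet> v - b1" for v
  have key: "g w * f u - g u * f w \<le> 0" if u: "u \<in> V" and w: "w \<in> V" and gu: "g u < 0" and gw: "g w > 0" for u w
  proof -
    define k where "k = g w - g u"
    have k: "k > 0" using gu gw k_def by simp
    define lam where "lam = g w / k"
    have lam: "0 \<le> lam" "0 \<le> 1 - lam" using k gu gw by (auto simp: lam_def k_def field_simps)
    define p where "p = lam *\<^sub>R u + (1 - lam) *\<^sub>R w"
    have pQ: "p \<in> convex hull V" unfolding p_def
      by (rule convexD[OF convex_convex_hull]) (use u w lam hull_subset[of V convex] in auto)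
    have "a1 \<bullet> p - b1 = lam * g u + (1 - lam) * g w"
      unfolding p_def g_def by (simp add: inner_add_right algebra_simps)
    also have "\<dots> = 0" unfolding lam_def k_def using k k_def by (simp add: field_simps)
    finally have "p \<in> {x. a1 \<bullet> x = b1}" by simp
    with pQ supp have "a \<bullet> p - b \<le> 0" by auto
    moreover have "a \<bullet> p - b = lam * f u + (1 - lam) * f w"
      unfolding p_def f_def by (simp add: inner_add_right algebra_simps)
    moreover have "lam * f u + (1 - lam) * f w = (g w * f u - g u * f w) / k"
    proof -
      have "1 - lam = (k - g w) / k" unfolding lam_def using k by (simp add: field_simps)
      also have "k - g w = - g u" unfolding k_def by simp
      finally have l1: "1 - lam = - g u / k" .
      show ?thesis unfolding l1 unfolding lam_def using k by (simp add: field_simps)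
    qed
    ultimately show ?thesis using k by (simp add: divide_le_0_iff)
  qed
  define Lo where "Lo = (\<lambda>v. f v / (- g v)) ` {v\<in>V. g v < 0}"
  define Up where "Up = (\<lambda>v. - f v / g v) ` {v\<in>V. g v > 0}"
  have finLo: "finite Lo" and finUp: "finite Up" using fin unfolding Lo_def Up_def by auto
  have LU: "l \<le> r" if lr: "l \<in> Lo" "r \<in> Up" for l r
  proof -
    obtain u where u: "u \<in> V" "g u < 0" "l = f u / (- g u)" using lr(1) Lo_def by auto
    obtain w where w: "w \<in> V" "g w > 0" "r = - f w / g w" using lr(2) Up_def by auto
    have "g w * f u - g u * f w \<le> 0" using key u w by auto
    hence h: "f u * g w \<le> f w * g u" by (simp add: mult.commute)
    have l1: "l * g u = - f u" and r1: "r * g w = - f w" using u w by auto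
    have "(l - r) * (g u * g w) = (l * g u) * g w - (r * g w) * g u" by (simp add: algebra_simps)
    also have "\<dots> = f w * g u - f u * g w" unfolding l1 r1 by (simp add: algebra_simps)
    finally have p: "(l - r) * (g u * g w) \<ge> 0" using h by simp
    have "g u * g w < 0" using u w by (simp add: mult_neg_pos)
    with p u(2) w(2) have "l - r \<le> 0" by (auto simp: zero_le_mult_iff)
    thus ?thesis by simp
  qed
  define \<mu> where "\<mu> = (if Lo = {} then (if Up = {} then 0 else Min Up) else Max Lo)"
  have "f v + \<mu> * g v \<le> 0" if v: "v \<in> V" for v
  proof (cases "g v = 0")
    case True
    have "v \<in> convex hull V" using v hull_subset[of V convex] by auto
    with True supp show ?thesis unfolding f_def g_def by auto
  next
    case False
    show ?thesis
    proof (cases "g v < 0")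
      case True
      have lv: "f v / (- g v) \<in> Lo" using v True Lo_def by auto
      hence "Lo \<noteq> {}" by auto
      hence "f v / (- g v) \<le> \<mu>" using lv finLo \<mu>_def by auto
      hence "\<mu> * g v \<le> f v / (- g v) * g v" using True by (intro mult_right_mono_neg) auto
      thus ?thesis using True by simp
    next
      case nn: False
      hence gp: "g v > 0" using False by simp
      have uv: "- f v / g v \<in> Up" using v gp Up_def by auto
      have "\<mu> \<le> - f v / g v"
      proof (cases "Lo = {}")
        case True
        thus ?thesis using uv finUp \<mu>_def by auto
      next
        case False
        have "Max Lo \<in> Lo" using False finLo by simp
        thus ?thesis using LU uv False \<mu>_def by auto
      qed
      hence "\<mu> * g v \<le> - f v / g v * g v" using gp by (intro mult_right_mono) auto
      thus ?thesis using gp by simp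
    qed
  qed
  thus ?thesis unfolding f_def g_def by blast
qed

theorem lemma3:
  fixes Q :: "(real^'m) set" and a1 a xbar :: "real^'m" and b1 b :: real
  assumes m2: "CARD('m) \<ge> 2"
    and poly: "rational_polytope Q"
    and fulldim: "aff_dim Q = int CARD('m)"
    and H1: "a1 \<noteq> 0"
    and Q1ne: "{x. a1 \<bullet> x = b1} \<inter> Q \<noteq> {}"
    and H: "a \<noteq> 0"
    and HneH1: "{x. a \<bullet> x = b} \<noteq> {x. a1 \<bullet> x = b1}"
    and supp: "\<forall>x\<in>{x. a1 \<bullet> x = b1} \<inter> Q. a \<bullet> x \<le> b"
    and face_ne: "{x. a \<bullet> x = b} \<inter> ({x. a1 \<bullet> x = b1} \<inter> Q) \<noteq> {}"
    and Hbar_not: "\<not> ({x. a1 \<bullet> x = b1} \<inter> Q \<subseteq> {x. a \<bullet> x \<ge> b})"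
    and xbar: "xbar \<in> rel_interior ({x. a \<bullet> x \<ge> b} \<inter> {x. a1 \<bullet> x = b1})"
  shows "infdist xbar Q \<ge>
           infdist xbar ({x. a \<bullet> x = b} \<inter> {x. a1 \<bullet> x = b1})
           * sin (theta Q {x. a1 \<bullet> x = b1} {x. a \<bullet> x \<ge> b})"
proof -
  define H1s where "H1s = {x. a1 \<bullet> x = b1}"
  define Hb where "Hb = {x. a \<bullet> x \<ge> b}"
  define L where "L = {x. a \<bullet> x = b} \<inter> H1s"
  obtain V where finV: "finite V" and QV: "Q = convex hull V"
    using poly unfolding rational_polytope_def by auto
  have Qne: "Q \<noteq> {}" using Q1ne by auto
  have cvx: "convex Q" using QV by simp
  have "affine hull Q = UNIV" using fulldim aff_dim_eq_full[of Q] by simp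
  hence intQ: "interior Q = rel_interior Q" using rel_interior_interior by metis
  hence "interior Q \<noteq> {}" using cvx Qne rel_interior_eq_empty by auto
  hence Qcl: "Q \<subseteq> closure (interior Q)" using convex_closure_interior[OF cvx] closure_subset by auto
  have frH: "frontier Hb = {x. a \<bullet> x = b}" unfolding Hb_def using frontier_halfspace_ge H by auto
  have xin: "xbar \<in> Hb \<inter> H1s" using xbar rel_interior_subset unfolding Hb_def H1s_def by blast
  define S where "S = {hyperplane_angle a' c | a' b' c d.
      a' \<noteq> 0 \<and> H1s = {x. a' \<bullet> x = b'} \<and> c \<noteq> 0 \<and>
      {x. c \<bullet> x = d} \<inter> H1s = frontier Hb \<inter> H1s \<and>
      separates_hp (interior Q) (Hb \<inter> H1s) c d}"
  have thetaS: "theta Q {x. a1 \<bullet> x = b1} {x. a \<bullet> x \<ge> b} = Sup S"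
    unfolding theta_def S_def H1s_def Hb_def by simp
  define D where "D = infdist xbar L"
  define E where "E = infdist xbar Q"
  have D0: "D \<ge> 0" and E0: "E \<ge> 0" unfolding D_def E_def by (auto simp: infdist_nonneg)
  have elem: "D * sin \<phi> \<le> E \<and> 0 \<le> \<phi> \<and> \<phi> \<le> pi / 2" if phiS: "\<phi> \<in> S" for \<phi>
  proof -
    obtain a' b' c d where phi: "\<phi> = hyperplane_angle a' c" and a': "a' \<noteq> 0"
      and H1eq: "H1s = {x. a' \<bullet> x = b'}" and c: "c \<noteq> 0"
      and Leq: "{x. c \<bullet> x = d} \<inter> H1s = frontier Hb \<inter> H1s"
      and sep: "separates_hp (interior Q) (Hb \<inter> H1s) c d"
      using phiS unfolding S_def by blast
    have Ldef: "{x. c \<bullet> x = d} \<inter> {x. a' \<bullet> x = b'} = L"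
      using Leq H1eq frH L_def by simp
    have xh: "a' \<bullet> xbar = b'" using xin H1eq by auto
    have r: "0 \<le> \<bar>a' \<bullet> c\<bar> / (norm a' * norm c)" "\<bar>a' \<bullet> c\<bar> / (norm a' * norm c) \<le> 1"
      using Cauchy_Schwarz_ineq2[of a' c] a' c by auto
    have rng: "0 \<le> \<phi> \<and> \<phi> \<le> pi / 2" unfolding phi hyperplane_angle_def
      using r arccos_lbound[of "\<bar>a' \<bullet> c\<bar> / (norm a' * norm c)"]
        arccos_le_pi2[of "\<bar>a' \<bullet> c\<bar> / (norm a' * norm c)"] by linarith
    from sep c consider
        (A) "\<forall>x\<in>interior Q. c \<bullet> x \<le> d" "\<forall>x\<in>Hb \<inter> H1s. c \<bullet> x \<ge> d"
      | (B) "\<forall>x\<in>interior Q. c \<bullet> x \<ge> d" "\<forall>x\<in>Hb \<inter> H1s. c \<bullet> x \<le> d"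
      unfolding separates_hp_def by blast
    hence "D * sin \<phi> \<le> E"
    proof cases
      case A
      have "interior Q \<subseteq> {x. c \<bullet> x \<le> d}" using A by auto
      hence "closure (interior Q) \<subseteq> {x. c \<bullet> x \<le> d}"
        by (intro closure_minimal) (auto simp: closed_halfspace_le closed_halfspace_ge)
      hence Qs: "\<forall>y\<in>Q. c \<bullet> y \<le> d" using Qcl by auto
      show ?thesis unfolding D_def E_def phi
        using oriented[OF a' c Ldef Qne Qs xh] A xin by auto
    next
      case B
      have "interior Q \<subseteq> {x. (-c) \<bullet> x \<le> -d}" using B by auto
      hence "closure (interior Q) \<subseteq> {x. (-c) \<bullet> x \<le> -d}"
        by (intro closure_minimal) (auto simp: closed_halfspace_le closed_halfspace_ge)
      hence Qs: "\<forall>y\<in>Q. (-c) \<bullet> y \<le> -d" using Qcl by auto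
      have Ld2: "{x. (-c) \<bullet> x = -d} \<inter> {x. a' \<bullet> x = b'} = L" using Ldef by simp
      have c2: "-c \<noteq> 0" using c by simp
      have "hyperplane_angle a' (-c) = hyperplane_angle a' c" unfolding hyperplane_angle_def by simp
      thus ?thesis unfolding D_def E_def phi
        using oriented[OF a' c2 Ld2 Qne Qs xh] B xin by auto
    qed
    thus ?thesis using rng by simp
  qed
  obtain \<mu> where mu: "\<forall>v\<in>V. (a \<bullet> v - b) + \<mu> * (a1 \<bullet> v - b1) \<le> 0"
    using mu_exists[OF finV, of a1 b1 a b] supp QV by auto
  define c where "c = a + \<mu> *\<^sub>R a1"
  define d where "d = b + \<mu> * b1"
  have cx: "c \<bullet> x - d = (a \<bullet> x - b) + \<mu> * (a1 \<bullet> x - b1)" for x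
    unfolding c_def d_def by (simp add: inner_add_left algebra_simps)
  have "V \<subseteq> {x. c \<bullet> x \<le> d}" using mu cx by (smt (verit) mem_Collect_eq subsetI)
  hence "convex hull V \<subseteq> {x. c \<bullet> x \<le> d}" by (intro hull_minimal) (auto simp: convex_halfspace_le)
  hence Qc: "\<forall>x\<in>Q. c \<bullet> x \<le> d" using QV by auto
  have c0: "c \<noteq> 0"
  proof
    assume "c = 0"
    hence aeq: "a = - \<mu> *\<^sub>R a1" unfolding c_def by (simp add: algebra_simps eq_neg_iff_add_eq_0)
    obtain p0 where p0: "a \<bullet> p0 = b" "a1 \<bullet> p0 = b1" using face_ne by auto
    have beq: "b = - \<mu> * b1" using p0 aeq by simp
    have mu0: "\<mu> \<noteq> 0" using aeq H by auto
    have "{x. a \<bullet> x = b} = {x. a1 \<bullet> x = b1}" using aeq beq mu0 by auto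
    thus False using HneH1 by simp
  qed
  have inS: "hyperplane_angle a1 c \<in> S"
    unfolding S_def
  proof (intro CollectI exI conjI)
    show "hyperplane_angle a1 c = hyperplane_angle a1 c" ..
    show "a1 \<noteq> 0" by (rule H1)
    show "H1s = {x. a1 \<bullet> x = b1}" by (simp add: H1s_def)
    show "c \<noteq> 0" by (rule c0)
    show "{x. c \<bullet> x = d} \<inter> H1s = frontier Hb \<inter> H1s"
      unfolding frH H1s_def using cx by (auto simp: algebra_simps) (smt (verit, best) cx)+
    show "separates_hp (interior Q) (Hb \<inter> H1s) c d"
    proof -
      have "\<forall>x\<in>interior Q. c \<bullet> x \<le> d" using Qc interior_subset[of Q] by auto
      moreover have "\<forall>x\<in>Hb \<inter> H1s. c \<bullet> x \<ge> d"
      proof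
        fix x assume "x \<in> Hb \<inter> H1s"
        hence "a \<bullet> x \<ge> b" "a1 \<bullet> x = b1" unfolding Hb_def H1s_def by auto
        thus "c \<bullet> x \<ge> d" using cx[of x] by simp
      qed
      ultimately show ?thesis unfolding separates_hp_def using c0 by blast
    qed
  qed
  hence Sne: "S \<noteq> {}" by auto
  have "D * sin (Sup S) \<le> E"
  proof (cases "E \<ge> D")
    case True
    have "D * sin (Sup S) \<le> D * 1" using D0 by (intro mult_left_mono) auto
    thus ?thesis using True by simp
  next
    case False
    hence Dp: "D > 0" using E0 by simp
    define t where "t = E / D"
    have t: "0 \<le> t" "t < 1" using False Dp E0 by (auto simp: t_def field_simps)
    have "\<phi> \<le> arcsin t" if "\<phi> \<in> S" for \<phi>
    proof -
      have e: "D * sin \<phi> \<le> E" "0 \<le> \<phi>" "\<phi> \<le> pi / 2" using elem[OF that] by auto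
      have "sin \<phi> \<le> t" using e(1) Dp by (simp add: t_def field_simps mult.commute)
      hence "arcsin (sin \<phi>) \<le> arcsin t"
        using t sin_ge_minus_one sin_le_one by (subst arcsin_le_mono) (auto simp: abs_le_iff)
      thus ?thesis using e arcsin_sin[of \<phi>] by simp
    qed
    hence sup1: "Sup S \<le> arcsin t" using Sne by (intro cSup_least) auto
    have "bdd_above S" using elem by (auto intro: bdd_aboveI[of _ "pi/2"])
    hence "hyperplane_angle a1 c \<le> Sup S" using inS by (intro cSup_upper)
    hence sup0: "0 \<le> Sup S" using elem[OF inS] by simp
    have "arcsin t \<le> pi / 2" using t arcsin_ubound[of t] by simp
    hence "sin (Sup S) \<le> sin (arcsin t)" using sup0 sup1 by (subst sin_mono_le_eq) auto
    also have "\<dots> = t" using t by simp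
    finally show ?thesis using Dp by (simp add: t_def field_simps mult.commute)
  qed
  thus ?thesis unfolding thetaS D_def E_def L_def H1s_def by simp
qed

end
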